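(* For every integer $n\ge0$ with $n\neq1$, $$B_n=\frac{1}{2-2^n}\sum_{K=0}^{\lfloor n/2\rfloor}(-1)^K\sum_{\substack{1\le q_1,\dots,q_K\le\lfloor n/2\rfloor\\ 2q_1+\cdots+2q_K=n}}\frac{1}{(2q_1+1)\cdots(2q_K+1)}\,\frac{n!}{(2q_1)!\cdots(2q_K)!}.$$
   Context: The Bernoulli numbers $B_n$ are defined by $\sum_{n\ge0}B_nz^n/n!=z/(e^z-1)$. The inner sum is over ordered $K$-tuples (the $K=0$ term is the empty tuple, which contributes $1$ exactly when $n=0$). *)

theory Defs
  imports "HOL-Computational_Algebra.Formal_Power_Series" "HOL-Library.FuncSet"
begin

definition bernoulli :: "nat \<Rightarrow> real" where
  "bernoulli n = fact n * fps_nth (fps_X / (fps_exp 1 - 1)) n"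

end

theory Submission
  imports Defs
begin

unbundle fps_syntax

definition GG :: "real fps" where
  "GG = Abs_fps (\<lambda>k. if k \<noteq> 0 \<and> even k then 1 / fact (k+1) else 0)"

definition EE :: "real fps" where "EE = fps_X / (fps_exp 1 - 1)"

lemma E_eq: "EE * (fps_exp 1 - 1) = fps_X"
proof -
  define H0 :: "real fps" where "H0 = Abs_fps (\<lambda>k. 1 / fact (k+1))"
  have h: "fps_exp 1 - 1 = fps_X * H0"
    by (rule fps_ext) (auto simp: H0_def fps_exp_nth fact_reduce)
  have "H0 dvd 1" by (simp add: H0_def)
  hence "fps_X * H0 dvd fps_X * 1" by (rule mult_dvd_mono[OF dvd_refl])
  hence "(fps_exp 1 - 1) dvd (fps_X :: real fps)" using h by simp
  thus ?thesis unfolding EE_def by (rule dvd_div_mult_self)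
qed

definition E2 :: "real fps" where "E2 = Abs_fps (\<lambda>n. 2^n * EE $ n)"

lemma E2_eq: "E2 * (fps_exp 2 - 1) = fps_const 2 * fps_X"
proof (rule fps_ext)
  fix n
  have c: "(fps_exp 2 - 1 :: real fps) $ m = 2^m * (fps_exp 1 - 1 :: real fps) $ m" for m
    by (cases m) (auto simp: fps_exp_nth)
  have "(E2 * (fps_exp 2 - 1)) $ n = (\<Sum>i=0..n. 2^n * (EE $ i * (fps_exp 1 - 1) $ (n - i)))"
    unfolding fps_mult_nth
    by (rule sum.cong) (auto simp: E2_def c power_add[symmetric])
  also have "\<dots> = 2^n * (EE * (fps_exp 1 - 1)) $ n"
    by (simp add: fps_mult_nth sum_distrib_left)
  also have "\<dots> = (fps_const 2 * fps_X) $ n" by (cases "n = 1") (auto simp: E_eq)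
  finally show "(E2 * (fps_exp 2 - 1)) $ n = (fps_const 2 * fps_X) $ n" .
qed

definition FF :: "real fps" where "FF = fps_const 2 * EE - E2"

lemma sinh_eq: "fps_const 2 * (fps_X * (1 + GG)) = fps_exp 1 - fps_exp (-1::real)"
proof (rule fps_ext)
  fix k :: nat
  show "(fps_const 2 * (fps_X * (1 + GG))) $ k = (fps_exp 1 - fps_exp (-1::real)) $ k"
  proof (cases "k = 0")
    case True then show ?thesis by simp
  next
    case False
    then obtain m where k: "k = Suc m" by (cases k) auto
    show ?thesis
    proof (cases "even k")
      case True
      have "odd m" using True k by auto
      then have "m \<noteq> 0" by (cases m) auto
      then show ?thesis using True k \<open>odd m\<close> by (simp add: GG_def fps_exp_nth)
    next
      case False
      then have "even m" using k by auto
      then show ?thesis using False k by (auto simp: GG_def fps_exp_nth algebra_simps)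
    qed
  qed
qed

lemma FF_key: "FF * (1 + GG) = 1"
proof -
  define e :: "real fps" where "e = fps_exp 1"
  define u :: "real fps" where "u = fps_exp (-1)"
  have ue: "u * e = 1" unfolding u_def e_def
    using fps_exp_add_mult[of "-1::real" 1] by simp
  have ee: "fps_exp 2 = e * e" unfolding e_def
    using fps_exp_add_mult[of "1::real" 1] by simp
  have h1: "EE * (e - 1) = fps_X" using E_eq unfolding e_def .
  have h2: "E2 * (e * e - 1) = fps_const 2 * fps_X" using E2_eq unfolding ee .
  have sh: "fps_const 2 * (fps_X * (1 + GG)) = e - u" using sinh_eq unfolding e_def u_def .
  have "(FF * (e - u)) * ((e - 1) * (e + 1) * e) = (fps_const 2 * fps_X) * ((e - 1) * (e + 1) * e)"
  proof -
    have "(FF * (e - u)) * ((e - 1) * (e + 1) * e)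
        = (fps_const 2 * (EE * (e - 1)) * (e + 1) - E2 * (e * e - 1)) * (e * e - u * e)"
      unfolding FF_def by (simp add: algebra_simps)
    also have "\<dots> = (fps_const 2 * fps_X) * e * (e * e - 1)"
      unfolding h1 h2 ue by (simp add: algebra_simps)
    also have "\<dots> = (fps_const 2 * fps_X) * ((e - 1) * (e + 1) * e)"
      by (simp add: algebra_simps)
    finally show ?thesis .
  qed
  moreover have "(e - 1) * (e + 1) * e \<noteq> 0"
  proof -
    have "e - 1 \<noteq> 0"
    proof
      assume "e - 1 = 0"
      hence "(e - 1) $ 1 = 0" by simp
      thus False by (simp add: e_def)
    qed
    moreover have "e + 1 \<noteq> 0"
    proof
      assume "e + 1 = 0"
      hence "(e + 1) $ 0 = 0" by simp
      thus False by (simp add: e_def)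
    qed
    moreover have "e \<noteq> 0"
    proof
      assume "e = 0"
      hence "e $ 0 = 0" by simp
      thus False by (simp add: e_def)
    qed
    ultimately show ?thesis by simp
  qed
  ultimately have "FF * (e - u) = fps_const 2 * fps_X" by simp
  hence "fps_X * (fps_const 2 * (FF * (1 + GG))) = fps_X * (fps_const 2 * 1)"
    unfolding sh[symmetric] by (simp add: algebra_simps)
  hence "fps_const 2 * (FF * (1 + GG)) = fps_const 2 * 1"
    by (simp del: mult_1_right)
  thus ?thesis by simp
qed

lemma GG_X2: "GG = fps_X ^ 2 * Abs_fps (\<lambda>k. GG $ (k + 2))"
proof (rule fps_ext)
  fix k
  show "GG $ k = (fps_X ^ 2 * Abs_fps (\<lambda>k. GG $ (k + 2))) $ k"
  proof (cases "k < 2")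
    case True
    then have "k = 0 \<or> k = 1" by auto
    then show ?thesis using True by (auto simp: fps_X_power_mult_nth GG_def)
  next
    case False
    then have "Suc (Suc (k - 2)) = k" by arith
    then show ?thesis using False by (simp add: fps_X_power_mult_nth)
  qed
qed

lemma vanish: "n < 2 * j \<Longrightarrow> (FF * GG ^ j) $ n = 0"
proof -
  assume n: "n < 2 * j"
  define H where "H = Abs_fps (\<lambda>k. GG $ (k + 2))"
  have g: "GG = fps_X ^ 2 * H" unfolding H_def by (rule GG_X2)
  have "GG ^ j = fps_X ^ (2 * j) * H ^ j"
    unfolding g by (simp only: power_mult_distrib power_mult)
  hence "(FF * GG ^ j) $ n = (fps_X ^ (2 * j) * (FF * H ^ j)) $ n"
    by (simp only: mult.left_commute)
  also have "\<dots> = 0" using n by (simp add: fps_X_power_mult_nth)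
  finally show ?thesis .
qed

definition CC :: "nat \<Rightarrow> real fps" where
  "CC M = (\<Sum>K\<le>M. fps_const ((-1)^K) * GG ^ K)"

lemma geom: "(1 + GG) * CC M = 1 - fps_const ((-1) ^ Suc M) * GG ^ Suc M"
proof (induction M)
  case 0
  have m1: "fps_const (-1::real) = -1" by (metis fps_const_neg fps_const_1_eq_1)
  show ?case by (simp add: CC_def m1)
next
  case (Suc M)
  have "(1 + GG) * CC (Suc M) = (1 + GG) * CC M + (1 + GG) * (fps_const ((-1) ^ Suc M) * GG ^ Suc M)"
    by (simp add: CC_def algebra_simps)
  also have "\<dots> = 1 + fps_const ((-1) ^ Suc M) * GG ^ Suc (Suc M)"
    unfolding Suc by (simp add: algebra_simps)
  also have "\<dots> = 1 - fps_const ((-1) ^ Suc (Suc M)) * GG ^ Suc (Suc M)"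
  proof -
    have c: "fps_const ((-1::real) ^ Suc (Suc M)) = - fps_const ((-1) ^ Suc M)"
      by (metis fps_const_neg mult_minus1 power_Suc)
    show ?thesis unfolding c by (simp del: fps_const_neg)
  qed
  finally show ?case .
qed

lemma CC_nth: "n < 2 * Suc M \<Longrightarrow> CC M $ n = FF $ n"
proof -
  assume n: "n < 2 * Suc M"
  have "CC M = FF * ((1 + GG) * CC M)" by (simp add: mult.assoc[symmetric] FF_key)
  also have "\<dots> = FF - fps_const ((-1) ^ Suc M) * (FF * GG ^ Suc M)"
    unfolding geom by (simp add: algebra_simps)
  finally have "CC M $ n = FF $ n - (-1) ^ Suc M * (FF * GG ^ Suc M) $ n" by simp
  thus ?thesis using vanish[OF n] by simp
qed

lemma FF_nth: "FF $ n = (2 - 2 ^ n) * EE $ n"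
  by (simp add: FF_def E2_def algebra_simps)

lemma trunc: "(\<And>i. i \<le> n \<Longrightarrow> f $ i = g $ i) \<Longrightarrow> m \<le> n \<Longrightarrow> (f ^ K) $ m = (g ^ K) $ m"
proof (induction K arbitrary: m)
  case 0 then show ?case by simp
next
  case (Suc K)
  show ?case unfolding power_Suc fps_mult_nth
    by (rule sum.cong) (use Suc in auto)
qed

definition aa :: "nat \<Rightarrow> real" where "aa q = 1 / fact (2 * q + 1)"

definition GN :: "nat \<Rightarrow> real fps" where
  "GN N = (\<Sum>x\<in>{1..N}. fps_const (aa x) * fps_X ^ (2 * x))"

lemma GN_nth: "k \<le> 2 * N + 1 \<Longrightarrow> GN N $ k = GG $ k"
proof -
  assume k: "k \<le> 2 * N + 1"
  have "GN N $ k = (\<Sum>x\<in>{1..N}. (if k = 2 * x then aa x else 0))"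
    unfolding GN_def fps_sum_nth by (rule sum.cong) auto
  also have "\<dots> = GG $ k"
  proof (cases "even k")
    case True
    then obtain h where h: "k = 2 * h" by blast
    have "(\<Sum>x\<in>{1..N}. (if k = 2 * x then aa x else 0)) = (\<Sum>x\<in>{1..N}. (if x = h then aa x else 0))"
      by (rule sum.cong) (auto simp: h)
    also have "\<dots> = (if h \<in> {1..N} then aa h else 0)" by simp
    also have "\<dots> = GG $ k" using k by (auto simp: h GG_def aa_def)
    finally show ?thesis .
  next
    case False
    then have "(\<Sum>x\<in>{1..N}. (if k = 2 * x then aa x else 0)) = 0"
      by (intro sum.neutral) auto
    then show ?thesis using False by (simp add: GG_def)
  qed
  finally show ?thesis .
qed

lemma fps_const_prod: "fps_const (prod f A) = (\<Prod>x\<in>A. fps_const (f x) :: real fps)"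
  by (induction A rule: infinite_finite_induct) (auto simp flip: fps_const_mult)

lemma GN_pow: "(GN N ^ K) $ n =
   (\<Sum>q\<in>{q \<in> PiE {..<K} (\<lambda>_. {1..N}). (\<Sum>i<K. 2 * q i) = n}. \<Prod>i<K. aa (q i))"
proof -
  have "GN N ^ K = (\<Prod>i<K. GN N)" by simp
  also have "\<dots> = (\<Sum>q\<in>PiE {..<K} (\<lambda>_. {1..N}). \<Prod>i<K. fps_const (aa (q i)) * fps_X ^ (2 * q i))"
    unfolding GN_def by (rule prod_sum_PiE) auto
  also have "\<dots> = (\<Sum>q\<in>PiE {..<K} (\<lambda>_. {1..N}). fps_const (\<Prod>i<K. aa (q i)) * fps_X ^ (\<Sum>i<K. 2 * q i))"
    by (rule sum.cong[OF refl]) (simp only: prod.distrib fps_const_prod power_sum)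
  finally have "(GN N ^ K) $ n = (\<Sum>q\<in>PiE {..<K} (\<lambda>_. {1..N}). (fps_const (\<Prod>i<K. aa (q i)) * fps_X ^ (\<Sum>i<K. 2 * q i)) $ n)"
    by (simp only: fps_sum_nth)
  also have "\<dots> = (\<Sum>q\<in>PiE {..<K} (\<lambda>_. {1..N}). (if (\<Sum>i<K. 2 * q i) = n then (\<Prod>i<K. aa (q i)) else 0))"
    by (rule sum.cong[OF refl]) (simp only: fps_mult_left_const_nth fps_X_power_nth, auto)
  also have "\<dots> = (\<Sum>q\<in>{q \<in> PiE {..<K} (\<lambda>_. {1..N}). (\<Sum>i<K. 2 * q i) = n}. \<Prod>i<K. aa (q i))"
    by (rule sum.inter_filter[symmetric]) (simp add: finite_PiE)
  finally show ?thesis .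
qed

lemma term_eq: "(1 / (\<Prod>i<K. real (2 * q i + 1))) * (fact n / (\<Prod>i<K. fact (2 * q i)))
   = fact n * (\<Prod>i<K. aa (q i))"
proof -
  have "(\<Prod>i<K. aa (q i)) = (\<Prod>i<K. 1 / (real (2 * q i + 1) * fact (2 * q i)))"
    by (rule prod.cong) (auto simp: aa_def)
  also have "\<dots> = 1 / ((\<Prod>i<K. real (2 * q i + 1)) * (\<Prod>i<K. fact (2 * q i)))"
    by (simp add: prod_dividef prod.distrib)
  finally show ?thesis by simp
qed

theorem mainTheorem4:
  fixes n :: nat
  assumes "n \<noteq> 1"
  shows "bernoulli n =
    1 / (2 - 2 ^ n) *
    (\<Sum>K = 0..n div 2. (-1) ^ K *
      (\<Sum>q \<in> {q \<in> PiE {..<K} (\<lambda>_. {1..n div 2}). (\<Sum>i<K. 2 * q i) = n}.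
         (1 / (\<Prod>i<K. real (2 * q i + 1))) * (fact n / (\<Prod>i<K. fact (2 * q i)))))"
proof -
  define N where "N = n div 2"
  have inner: "(\<Sum>q \<in> {q \<in> PiE {..<K} (\<lambda>_. {1..N}). (\<Sum>i<K. 2 * q i) = n}.
         (1 / (\<Prod>i<K. real (2 * q i + 1))) * (fact n / (\<Prod>i<K. fact (2 * q i))))
       = fact n * (GG ^ K) $ n" for K
  proof -
    have t: "(GN N ^ K) $ n = (GG ^ K) $ n"
      by (rule trunc[of n]) (auto intro: GN_nth simp: N_def)
    have "(\<Sum>q \<in> {q \<in> PiE {..<K} (\<lambda>_. {1..N}). (\<Sum>i<K. 2 * q i) = n}.
         (1 / (\<Prod>i<K. real (2 * q i + 1))) * (fact n / (\<Prod>i<K. fact (2 * q i))))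
      = (\<Sum>q \<in> {q \<in> PiE {..<K} (\<lambda>_. {1..N}). (\<Sum>i<K. 2 * q i) = n}. fact n * (\<Prod>i<K. aa (q i)))"
      by (rule sum.cong[OF refl], rule term_eq)
    also have "\<dots> = fact n * (GN N ^ K) $ n"
      by (simp only: sum_distrib_left[symmetric] GN_pow)
    finally show ?thesis unfolding t .
  qed
  have "(\<Sum>K = 0..N. (-1) ^ K * (fact n * (GG ^ K) $ n)) = fact n * CC N $ n"
    by (simp add: CC_def fps_sum_nth sum_distrib_left atLeast0AtMost algebra_simps)
  also have "\<dots> = fact n * ((2 - 2 ^ n) * EE $ n)"
    using CC_nth[of n N] FF_nth[of n] by (simp add: N_def)
  finally have s: "(\<Sum>K = 0..N. (-1) ^ K * (fact n * (GG ^ K) $ n)) = fact n * ((2 - 2 ^ n) * EE $ n)" .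
  have nz: "(2 - 2 ^ n :: real) \<noteq> 0"
  proof
    assume "(2 - 2 ^ n :: real) = 0"
    hence "(2::real) ^ n = 2 ^ 1" by simp
    hence "n = 1" by (subst (asm) power_inject_exp) auto
    thus False using assms by simp
  qed
  have "1 / (2 - 2 ^ n) *
    (\<Sum>K = 0..n div 2. (-1) ^ K *
      (\<Sum>q \<in> {q \<in> PiE {..<K} (\<lambda>_. {1..n div 2}). (\<Sum>i<K. 2 * q i) = n}.
         (1 / (\<Prod>i<K. real (2 * q i + 1))) * (fact n / (\<Prod>i<K. fact (2 * q i)))))
     = 1 / (2 - 2 ^ n) * (\<Sum>K = 0..N. (-1) ^ K * (fact n * (GG ^ K) $ n))"
    by (simp only: N_def[symmetric] inner)
  also have "\<dots> = 1 / (2 - 2 ^ n) * (fact n * ((2 - 2 ^ n) * EE $ n))"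
    by (simp only: s)
  also have "\<dots> = fact n * EE $ n" using nz by simp
  also have "\<dots> = bernoulli n" by (simp add: bernoulli_def EE_def)
  finally show ?thesis by (rule sym)
qed

end
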